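(* Let $\mathcal{P},\mathcal{S}$ be patterns, let $P\in\mathbb{R}^{n\times n}(\mathcal{P})$ be a reversible stochastic matrix with stationary distribution $\boldsymbol{\pi}$, $\hat{\boldsymbol{\pi}}=\boldsymbol{\pi}^{1/2}$ entrywise, and let \[ \mathcal{M}_{P,\boldsymbol{\pi}}=\Big\{X\in\mathbb{R}^{n\times n}_{\mathrm{exact}}(\mathcal{P}\cup\mathcal{S}) : X=X^\top,\ X\hat{\boldsymbol{\pi}}=\hat{\boldsymbol{\pi}},\ X_{ij}>0\text{ if }\{i,j\}\in\mathcal{S},\ X_{ij}=\tfrac{\hat\pi_i}{\hat\pi_j}P_{ij}\text{ if }\{i,j\}\notin\mathcal{S}\Big\}. \] Let $S\in\mathbb{R}^{n\times n}$ be given by $S_{ij}=1$ if $\{i,j\}\in\mathcal{S}$ and $S_{ij}=0$ otherwise. Then for every $X\in\mathcal{M}_{P,\boldsymbol{\pi}}$ the matrix \[ \operatorname{diag}\big((X\odot S)\boldsymbol{\pi}\big)+D_{\hat{\boldsymbol{\pi}}}(X\odot S)D_{\hat{\boldsymbol{\pi}}} \] is invertible.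
   Context: A stochastic matrix is nonnegative with row sums $1$; it is reversible if irreducible and its (unique, positive) stationary distribution $\boldsymbol{\pi}$ satisfies $\pi_iP_{ij}=\pi_jP_{ji}$ for all $i,j$. A pattern is a set of unordered pairs $\{i,j\}$, $1\le i,j\le n$, containing $\{i,i\}$ for all $i$. $\mathbb{R}^{n\times n}(\mathcal{S})$ is the set of real $n\times n$ matrices $\Delta$ with $\Delta_{ij}=\Delta_{ji}=0$ whenever $\{i,j\}\notin\mathcal{S}$; $\mathbb{R}^{n\times n}_{\mathrm{exact}}(\mathcal{S})$ is the set of real $n\times n$ matrices $\Delta$ with ($\Delta_{ij}\ne0$ and $\Delta_{ji}\ne0$) if and only if $\{i,j\}\in\mathcal{S}$. $\odot$ is the entrywise product; $\operatorname{diag}(\mathbf{v})$ and $D_{\mathbf{v}}$ both denote the diagonal matrix with diagonal $\mathbf{v}$. *)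

theory Defs
  imports "HOL-Analysis.Analysis"
begin

text \<open>Matrices are n x n real matrices indexed by a finite type 'n.
  A pattern is a set of unordered pairs, represented as sets {i,j} (with {i,i} = {i}).\<close>

definition is_pattern :: "'n set set \<Rightarrow> bool" where
  "is_pattern S \<longleftrightarrow> (\<forall>e\<in>S. \<exists>i j. e = {i, j}) \<and> (\<forall>i. {i, i} \<in> S)"

definition in_pattern :: "real^'n^'n \<Rightarrow> 'n set set \<Rightarrow> bool" where
  "in_pattern A S \<longleftrightarrow> (\<forall>i j. {i, j} \<notin> S \<longrightarrow> A$i$j = 0 \<and> A$j$i = 0)"

definition in_exact_pattern :: "real^'n^'n \<Rightarrow> 'n set set \<Rightarrow> bool" where
  "in_exact_pattern A S \<longleftrightarrow> (\<forall>i j. (A$i$j \<noteq> 0 \<and> A$j$i \<noteq> 0) \<longleftrightarrow> {i, j} \<in> S)"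

definition stochastic :: "real^'n^'n \<Rightarrow> bool" where
  "stochastic P \<longleftrightarrow> (\<forall>i j. P$i$j \<ge> 0) \<and> (\<forall>i. (\<Sum>j\<in>UNIV. P$i$j) = 1)"

definition irreducible_mat :: "real^'n^'n \<Rightarrow> bool" where
  "irreducible_mat P \<longleftrightarrow> (\<forall>i j. (i, j) \<in> {(a, b). P$a$b \<noteq> 0}\<^sup>*)"

definition stationary_distribution :: "real^'n^'n \<Rightarrow> real^'n \<Rightarrow> bool" where
  "stationary_distribution P \<pi> \<longleftrightarrow>
     (\<forall>i. \<pi>$i \<ge> 0) \<and> (\<Sum>i\<in>UNIV. \<pi>$i) = 1 \<and> \<pi> v* P = \<pi>"

text \<open>P is a reversible stochastic matrix with stationary distribution pi
  (the stationary distribution of an irreducible stochastic matrix is unique and positive).\<close>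
definition reversible_with :: "real^'n^'n \<Rightarrow> real^'n \<Rightarrow> bool" where
  "reversible_with P \<pi> \<longleftrightarrow> stochastic P \<and> irreducible_mat P \<and>
     stationary_distribution P \<pi> \<and> (\<forall>i. \<pi>$i > 0) \<and>
     (\<forall>i j. \<pi>$i * P$i$j = \<pi>$j * P$j$i)"

definition hadamard :: "real^'n^'n \<Rightarrow> real^'n^'n \<Rightarrow> real^'n^'n" where
  "hadamard A B = (\<chi> i j. A$i$j * B$i$j)"

definition diag_mat :: "real^'n \<Rightarrow> real^'n^'n" where
  "diag_mat v = (\<chi> i j. if i = j then v$i else 0)"

definition pattern_indicator :: "'n set set \<Rightarrow> real^'n^'n" where
  "pattern_indicator S = (\<chi> i j. if {i, j} \<in> S then 1 else 0)"

definition M_set :: "'n set set \<Rightarrow> 'n set set \<Rightarrow> real^'n^'n \<Rightarrow> real^'n \<Rightarrow> (real^'n^'n) set" where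
  "M_set Pp Sp P \<pi> = (let \<pi>h = (\<chi> i. sqrt (\<pi>$i)) in
     {X. in_exact_pattern X (Pp \<union> Sp) \<and> transpose X = X \<and> X *v \<pi>h = \<pi>h \<and>
         (\<forall>i j. {i, j} \<in> Sp \<longrightarrow> X$i$j > 0) \<and>
         (\<forall>i j. {i, j} \<notin> Sp \<longrightarrow> X$i$j = \<pi>h$i / \<pi>h$j * P$i$j)})"

end

theory Submission
  imports Defs
begin

lemma core:
  fixes Y :: "'n::finite \<Rightarrow> 'n \<Rightarrow> real" and p x :: "'n \<Rightarrow> real"
  assumes sym: "\<And>i k. Y i k = Y k i" and nn: "\<And>i k. Y i k \<ge> 0"
    and dg: "\<And>i. Y i i > 0" and pp: "\<And>i. p i > 0"
    and eq: "\<And>i. (\<Sum>k\<in>UNIV. Y i k * p k) * x i + sqrt (p i) * (\<Sum>k\<in>UNIV. Y i k * (sqrt (p k) * x k)) = 0"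
  shows "x i = 0"
proof -
  define s where "s i = sqrt (p i)" for i
  have ss: "s i * s i = p i" for i using pp[of i] by (simp add: s_def)
  define T where "T i k = Y i k * (p k * x i ^ 2 + s i * s k * x i * x k)" for i k
  have Q0: "(\<Sum>i\<in>UNIV. \<Sum>k\<in>UNIV. T i k) = 0"
  proof -
    have "(\<Sum>k\<in>UNIV. T i k) = x i * ((\<Sum>k\<in>UNIV. Y i k * p k) * x i + s i * (\<Sum>k\<in>UNIV. Y i k * (s k * x k)))" for i
      by (simp add: T_def sum_distrib_left sum_distrib_right sum.distrib[symmetric] power2_eq_square algebra_simps)
    also have "\<dots> i = 0" for i using eq[of i] by (simp add: s_def)
    finally show ?thesis by simp
  qed
  have Q1: "(\<Sum>i\<in>UNIV. \<Sum>k\<in>UNIV. T k i) = 0"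
    using Q0 by (subst sum.swap) simp
  have "(\<Sum>i\<in>UNIV. \<Sum>k\<in>UNIV. Y i k * (s k * x i + s i * x k)^2) = 
        (\<Sum>i\<in>UNIV. \<Sum>k\<in>UNIV. T i k) + (\<Sum>i\<in>UNIV. \<Sum>k\<in>UNIV. T k i)"
  proof -
    have "Y i k * (s k * x i + s i * x k)^2 = T i k + T k i" for i k
      unfolding T_def using sym[of i k]
      by (simp add: power2_eq_square algebra_simps ss[symmetric])
    then show ?thesis by (simp add: sum.distrib)
  qed
  then have Z: "(\<Sum>i\<in>UNIV. \<Sum>k\<in>UNIV. Y i k * (s k * x i + s i * x k)^2) = 0"
    using Q0 Q1 by simp
  have nn2: "\<And>i k. Y i k * (s k * x i + s i * x k)^2 \<ge> 0" using nn by simp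
  have "(\<Sum>k\<in>UNIV. Y i k * (s k * x i + s i * x k)^2) = 0"
    using Z by (subst (asm) sum_nonneg_eq_0_iff) (auto intro: sum_nonneg nn2)
  then have "Y i i * (s i * x i + s i * x i)^2 = 0"
    by (subst (asm) sum_nonneg_eq_0_iff) (auto intro: nn2)
  moreover have "s i > 0" using pp[of i] by (simp add: s_def)
  ultimately show ?thesis using dg[of i] by simp
qed

theorem proposition4p7:
  fixes Pp Sp :: "'n::finite set set" and P :: "real^'n^'n" and \<pi> :: "real^'n" and X :: "real^'n^'n"
  assumes "is_pattern Pp" and "is_pattern Sp"
    and "in_pattern P Pp"
    and "reversible_with P \<pi>"
    and "X \<in> M_set Pp Sp P \<pi>"
  shows "invertible (diag_mat (hadamard X (pattern_indicator Sp) *v \<pi>)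
           + diag_mat (\<chi> i. sqrt (\<pi>$i)) ** hadamard X (pattern_indicator Sp) ** diag_mat (\<chi> i. sqrt (\<pi>$i)))"
proof -
  define Y where "Y i k = (if {i, k} \<in> Sp then X$i$k else 0)" for i k
  have pp: "\<And>i. \<pi>$i > 0" using assms(4) by (simp add: reversible_with_def)
  have XS: "transpose X = X" and Xpos: "\<And>i j. {i, j} \<in> Sp \<Longrightarrow> X$i$j > 0"
    using assms(5) by (auto simp: M_set_def Let_def)
  have Xsym: "X$i$k = X$k$i" for i k
    using XS unfolding transpose_def by (metis vec_lambda_beta)
  have sym: "Y i k = Y k i" for i k by (simp add: Y_def Xsym insert_commute)
  have nn: "Y i k \<ge> 0" for i k using Xpos[of i k] by (simp add: Y_def less_imp_le)
  have dg: "Y i i > 0" for i using assms(2) Xpos[of i i] by (simp add: Y_def is_pattern_def)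
  have H: "hadamard X (pattern_indicator Sp) = (\<chi> i k. Y i k)"
    by (simp add: hadamard_def pattern_indicator_def Y_def vec_eq_iff)
  let ?A = "diag_mat (hadamard X (pattern_indicator Sp) *v \<pi>)
           + diag_mat (\<chi> i. sqrt (\<pi>$i)) ** hadamard X (pattern_indicator Sp) ** diag_mat (\<chi> i. sqrt (\<pi>$i))"
  have comp: "(?A *v x)$i = (\<Sum>k\<in>UNIV. Y i k * \<pi>$k) * x$i + sqrt (\<pi>$i) * (\<Sum>k\<in>UNIV. Y i k * (sqrt (\<pi>$k) * x$k))" for x i
  proof -
    have dv: "(diag_mat v *v y)$j = v$j * y$j" for v y :: "real^'n" and j
    proof -
      have "(diag_mat v *v y)$j = (\<Sum>ja\<in>UNIV. if j = ja then v$j * y$ja else 0)"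
        unfolding diag_mat_def matrix_vector_mult_def by (simp only: vec_lambda_beta) (rule sum.cong; simp)
      then show ?thesis by simp
    qed
    define D where "D = diag_mat (\<chi> i. sqrt (\<pi>$i))"
    define M where "M = (\<chi> i k. Y i k)"
    have H': "hadamard X (pattern_indicator Sp) = M" using H M_def by simp
    have e: "?A *v x = diag_mat (M *v \<pi>) *v x + D *v (M *v (D *v x))"
      by (simp only: D_def H' matrix_vector_mult_add_rdistrib matrix_vector_mul_assoc matrix_mul_assoc)
    have Dx: "(D *v y)$j = sqrt (\<pi>$j) * y$j" for y j
      by (simp add: D_def dv)
    have c1: "(M *v z)$j = (\<Sum>k\<in>UNIV. Y j k * z$k)" for z j
      by (simp add: M_def matrix_vector_mult_def)
    show ?thesis
      apply (subst e) apply (subst vector_add_component) apply (subst dv) apply (subst Dx) apply (subst c1) apply (subst c1) apply (subst Dx) apply (rule refl) done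
  qed
  have "\<forall>x. ?A *v x = 0 \<longrightarrow> x = 0"
  proof (intro allI impI)
    fix x :: "real^'n" assume "?A *v x = 0"
    then have EQ: "\<And>i. (\<Sum>k\<in>UNIV. Y i k * \<pi>$k) * x$i + sqrt (\<pi>$i) * (\<Sum>k\<in>UNIV. Y i k * (sqrt (\<pi>$k) * x$k)) = 0"
    proof -
      fix i
      have "(?A *v x)$i = 0" using \<open>?A *v x = 0\<close> by (simp only: zero_index)
      then show "(\<Sum>k\<in>UNIV. Y i k * \<pi>$k) * x$i + sqrt (\<pi>$i) * (\<Sum>k\<in>UNIV. Y i k * (sqrt (\<pi>$k) * x$k)) = 0"
        by (simp only: comp)
    qed
    have "x$i = 0" for i
      by (rule core[of Y "\<lambda>i. \<pi>$i" "\<lambda>i. x$i", OF sym nn dg pp EQ])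
    then show "x = 0" by (simp add: vec_eq_iff)
  qed
  then show ?thesis
    unfolding invertible_left_inverse matrix_left_invertible_ker .
qed

end
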